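(* For every integer $t\geq 2$ there exist a connected graph $G$ and a function $g:A\to B$ such that $fix(G)-fix(F_G)=t$.
   Context: A set $S\subseteq V(H)$ is a fixing set of a graph $H$ if the only automorphism of $H$ fixing every vertex of $S$ is the identity; $fix(H)$ is the minimum cardinality of a fixing set of $H$. Functigraph: let $G_1,G_2$ be disjoint copies of a connected graph $G$, with $A=V(G_1)$, $B=V(G_2)$, and let $g:A\to B$ be a function. The functigraph $F_G$ has vertex set $A\cup B$ and edge set $E(G_1)\cup E(G_2)\cup\{ug(u):u\in A\}$. *)

theory Defs
  imports Main "HOL-Library.FuncSet"
begin

definition simple_graph :: "'a set \<Rightarrow> ('a \<Rightarrow> 'a \<Rightarrow> bool) \<Rightarrow> bool" where
  "simple_graph V E \<longleftrightarrow> finite V \<and> (\<forall>x y. E x y \<longrightarrow> x \<in> V \<and> y \<in> V)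
     \<and> (\<forall>x y. E x y \<longrightarrow> E y x) \<and> (\<forall>x. \<not> E x x)"

definition connected_graph :: "'a set \<Rightarrow> ('a \<Rightarrow> 'a \<Rightarrow> bool) \<Rightarrow> bool" where
  "connected_graph V E \<longleftrightarrow> simple_graph V E \<and> V \<noteq> {}
     \<and> (\<forall>x\<in>V. \<forall>y\<in>V. E\<^sup>*\<^sup>* x y)"

definition automorphism :: "'a set \<Rightarrow> ('a \<Rightarrow> 'a \<Rightarrow> bool) \<Rightarrow> ('a \<Rightarrow> 'a) \<Rightarrow> bool" where
  "automorphism V E \<sigma> \<longleftrightarrow> bij_betw \<sigma> V V \<and> (\<forall>x\<in>V. \<forall>y\<in>V. E x y \<longleftrightarrow> E (\<sigma> x) (\<sigma> y))"

definition fixing_set :: "'a set \<Rightarrow> ('a \<Rightarrow> 'a \<Rightarrow> bool) \<Rightarrow> 'a set \<Rightarrow> bool" where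
  "fixing_set V E S \<longleftrightarrow> S \<subseteq> V \<and>
     (\<forall>\<sigma>. automorphism V E \<sigma> \<and> (\<forall>x\<in>S. \<sigma> x = x) \<longrightarrow> (\<forall>x\<in>V. \<sigma> x = x))"

text \<open>Fixing number: minimum cardinality of a fixing set (V itself is one).\<close>
definition fix_num :: "'a set \<Rightarrow> ('a \<Rightarrow> 'a \<Rightarrow> bool) \<Rightarrow> nat" where
  "fix_num V E = Min (card ` {S. fixing_set V E S})"

text \<open>Functigraph: two disjoint copies Inl ` V (= A) and Inr ` V (= B) of G, plus the
  edges u g(u) for u in A.\<close>
definition functigraph_vertices :: "'a set \<Rightarrow> ('a + 'a) set" where
  "functigraph_vertices V = Inl ` V \<union> Inr ` V"

definition functigraph_edges ::
  "'a set \<Rightarrow> ('a \<Rightarrow> 'a \<Rightarrow> bool) \<Rightarrow> ('a \<Rightarrow> 'a) \<Rightarrow> ('a + 'a) \<Rightarrow> ('a + 'a) \<Rightarrow> bool" where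
  "functigraph_edges V E g x y \<longleftrightarrow>
     (\<exists>a b. x = Inl a \<and> y = Inl b \<and> E a b) \<or>
     (\<exists>a b. x = Inr a \<and> y = Inr b \<and> E a b) \<or>
     (\<exists>u\<in>V. x = Inl u \<and> y = Inr (g u)) \<or>
     (\<exists>u\<in>V. x = Inr (g u) \<and> y = Inl u)"

end

theory Submission
  imports Defs
begin


definition nbrs :: "'a set \<Rightarrow> ('a \<Rightarrow> 'a \<Rightarrow> bool) \<Rightarrow> 'a \<Rightarrow> 'a set" where
  "nbrs V E x = {y\<in>V. E x y}"
definition deg :: "'a set \<Rightarrow> ('a \<Rightarrow> 'a \<Rightarrow> bool) \<Rightarrow> 'a \<Rightarrow> nat" where
  "deg V E x = card (nbrs V E x)"

lemma aut_in: "automorphism V E \<sigma> \<Longrightarrow> x \<in> V \<Longrightarrow> \<sigma> x \<in> V"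
  unfolding automorphism_def by (meson bij_betw_apply)

lemma aut_inj: "automorphism V E \<sigma> \<Longrightarrow> inj_on \<sigma> V"
  unfolding automorphism_def by (simp add: bij_betw_def)

lemma aut_edge: "automorphism V E \<sigma> \<Longrightarrow> x \<in> V \<Longrightarrow> y \<in> V \<Longrightarrow> E (\<sigma> x) (\<sigma> y) = E x y"
  unfolding automorphism_def by auto

lemma aut_deg:
  assumes a: "automorphism V E \<sigma>" and x: "x \<in> V"
  shows "deg V E (\<sigma> x) = deg V E x"
proof -
  have "nbrs V E (\<sigma> x) = \<sigma> ` nbrs V E x"
  proof
    show "\<sigma> ` nbrs V E x \<subseteq> nbrs V E (\<sigma> x)"
      using a x by (auto simp: nbrs_def aut_in aut_edge)
    show "nbrs V E (\<sigma> x) \<subseteq> \<sigma> ` nbrs V E x"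
    proof
      fix y assume y: "y \<in> nbrs V E (\<sigma> x)"
      then have yV: "y \<in> V" by (simp add: nbrs_def)
      from a have "\<sigma> ` V = V" unfolding automorphism_def by (simp add: bij_betw_def)
      with yV obtain z where z: "z \<in> V" "y = \<sigma> z" by blast
      with y a x have "E x z" by (auto simp: nbrs_def aut_edge)
      with z show "y \<in> \<sigma> ` nbrs V E x" by (auto simp: nbrs_def)
    qed
  qed
  moreover have "inj_on \<sigma> (nbrs V E x)"
    using aut_inj[OF a] by (rule inj_on_subset) (auto simp: nbrs_def)
  ultimately show ?thesis by (simp add: deg_def card_image)
qed

lemma L2:
  assumes a: "automorphism V E \<sigma>" and w: "w \<in> V" "\<sigma> w = w" and x: "x \<in> V" "E w x"
    and oth: "\<And>y. y \<in> V \<Longrightarrow> E w y \<Longrightarrow> y \<noteq> x \<Longrightarrow> deg V E y = deg V E x \<Longrightarrow> \<sigma> y = y"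
  shows "\<sigma> x = x"
proof (rule ccontr)
  assume ne: "\<sigma> x \<noteq> x"
  have zV: "\<sigma> x \<in> V" using aut_in[OF a x(1)] .
  have "E w (\<sigma> x)" using aut_edge[OF a w(1) x(1)] w(2) x(2) by simp
  then have "\<sigma> (\<sigma> x) = \<sigma> x" using oth[OF zV _ ne] aut_deg[OF a x(1)] by simp
  then have "\<sigma> x = x" using aut_inj[OF a] zV x(1) by (simp add: inj_on_def)
  with ne show False by simp
qed

lemma elim:
  assumes a: "automorphism V E \<sigma>" and x: "x \<in> V" and oth: "\<And>y. y \<in> V \<Longrightarrow> y \<noteq> x \<Longrightarrow> \<sigma> y = y"
  shows "\<sigma> x = x"
proof (rule ccontr)
  assume ne: "\<sigma> x \<noteq> x"
  have zV: "\<sigma> x \<in> V" using aut_in[OF a x] .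
  then have "\<sigma> (\<sigma> x) = \<sigma> x" using oth ne by simp
  then have "\<sigma> x = x" using aut_inj[OF a] zV x by (simp add: inj_on_def)
  with ne show False by simp
qed

definition sw :: "'a \<Rightarrow> 'a \<Rightarrow> 'a \<Rightarrow> 'a" where
  "sw a b z = (if z = a then b else if z = b then a else z)"

lemma sw_edge:
  assumes tw: "\<And>z. z \<noteq> a \<Longrightarrow> z \<noteq> b \<Longrightarrow> (E a z \<longleftrightarrow> E b z) \<and> (E z a \<longleftrightarrow> E z b)"
    and "\<not> E a b" "\<not> E b a" "\<not> E a a" "\<not> E b b"
  shows "E x y = E (sw a b x) (sw a b y)"
proof (cases "x = a \<or> x = b")
  case True
  show ?thesis
  proof (cases "y = a \<or> y = b")
    case True
    with \<open>x = a \<or> x = b\<close> show ?thesis using assms(2-5) by (auto simp: sw_def)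
  next
    case False
    then have sy: "sw a b y = y" by (simp add: sw_def)
    have "E a y = E b y" using tw[of y] False by blast
    with \<open>x = a \<or> x = b\<close> sy show ?thesis by (auto simp: sw_def)
  qed
next
  case False
  then have sx: "sw a b x = x" by (simp add: sw_def)
  show ?thesis
  proof (cases "y = a \<or> y = b")
    case True
    have "E x a = E x b" using tw[of x] False by blast
    with True sx show ?thesis by (auto simp: sw_def)
  next
    case False
    then have "sw a b y = y" by (simp add: sw_def)
    with sx show ?thesis by simp
  qed
qed

lemma sw_aut:
  assumes "a \<in> V" "b \<in> V"
    and tw: "\<And>z. z \<noteq> a \<Longrightarrow> z \<noteq> b \<Longrightarrow> (E a z \<longleftrightarrow> E b z) \<and> (E z a \<longleftrightarrow> E z b)"
    and "\<not> E a b" "\<not> E b a" "\<not> E a a" "\<not> E b b"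
  shows "automorphism V E (sw a b)"
  unfolding automorphism_def
proof
  show "bij_betw (sw a b) V V"
  proof (rule bij_betw_byWitness[where f'="sw a b"])
    have inv: "sw a b (sw a b z) = z" for z by (simp add: sw_def)
    have im: "sw a b ` V \<subseteq> V" using assms(1,2) by (auto simp: sw_def)
    show "\<forall>x\<in>V. sw a b (sw a b x) = x" using inv by blast
    show "\<forall>x\<in>V. sw a b (sw a b x) = x" using inv by blast
    show "sw a b ` V \<subseteq> V" by (rule im)
    show "sw a b ` V \<subseteq> V" by (rule im)
  qed
  show "\<forall>x\<in>V. \<forall>y\<in>V. E x y = E (sw a b x) (sw a b y)"
    using sw_edge[OF tw assms(4-7)] by blast
qed

lemma fix_numI:
  assumes "finite V" "fixing_set V E S" "card S = k" "\<And>S'. fixing_set V E S' \<Longrightarrow> k \<le> card S'"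
  shows "fix_num V E = k"
  unfolding fix_num_def
proof (rule Min_eqI)
  have "{S. fixing_set V E S} \<subseteq> Pow V" by (auto simp: fixing_set_def)
  then show "finite (card ` {S. fixing_set V E S})"
    using assms(1) by (meson finite_Pow_iff finite_imageI finite_subset)
next
  show "\<And>y. y \<in> card ` {S. fixing_set V E S} \<Longrightarrow> k \<le> y" using assms(4) by blast
  show "k \<in> card ` {S. fixing_set V E S}" using assms(2,3) by blast
qed



definition GV :: "nat \<Rightarrow> nat set" where "GV m = {0..2*m+1}"
definition GE :: "nat \<Rightarrow> nat \<Rightarrow> nat \<Rightarrow> bool" where
  "GE m x y \<longleftrightarrow> x \<le> 2*m+1 \<and> y \<le> 2*m+1 \<and>
     ((x \<le> m+1 \<and> y \<le> m+1 \<and> (x = y+1 \<or> y = x+1)) \<or> (x = 0 \<and> y \<ge> m+2) \<or> (y = 0 \<and> x \<ge> m+2))"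

lemma GE_leaf: "m+2 \<le> x \<Longrightarrow> x \<le> 2*m+1 \<Longrightarrow> GE m x y \<longleftrightarrow> y = 0"
  by (auto simp: GE_def)
lemma GE_0: "GE m 0 y \<longleftrightarrow> y = 1 \<or> (m+2 \<le> y \<and> y \<le> 2*m+1)"
  by (auto simp: GE_def)
lemma GE_mid: "1 \<le> x \<Longrightarrow> x \<le> m \<Longrightarrow> GE m x y \<longleftrightarrow> y = x - 1 \<or> y = x+1"
  by (auto simp: GE_def)
lemma GE_end: "GE m (m+1) y \<longleftrightarrow> y = m"
  by (auto simp: GE_def)
lemma GE_sym: "GE m x y = GE m y x" by (auto simp: GE_def)

lemma G_simple: "simple_graph (GV m) (GE m)"
  by (auto simp: simple_graph_def GV_def GE_def)

lemma G_conn: "connected_graph (GV m) (GE m)"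
proof -
  have path: "j \<le> m+1 \<Longrightarrow> (GE m)\<^sup>*\<^sup>* 0 j" for j
  proof (induction j)
    case (Suc j)
    then have "GE m j (Suc j)" by (auto simp: GE_def)
    with Suc show ?case by (meson Suc_leD rtranclp.rtrancl_into_rtrancl)
  qed simp
  have from0: "x \<in> GV m \<Longrightarrow> (GE m)\<^sup>*\<^sup>* 0 x" for x
  proof -
    assume x: "x \<in> GV m"
    show ?thesis
    proof (cases "x \<le> m+1")
      case True then show ?thesis by (rule path)
    next
      case False
      with x have "GE m 0 x" by (auto simp: GE_def GV_def)
      then show ?thesis by blast
    qed
  qed
  have symE: "(GE m)\<^sup>*\<^sup>* a b \<Longrightarrow> (GE m)\<^sup>*\<^sup>* b a" for a b
  proof (induction rule: rtranclp_induct)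
    case (step y z)
    then have "GE m z y" by (simp add: GE_sym)
    with step show ?case by (meson converse_rtranclp_into_rtranclp)
  qed simp
  show ?thesis
    unfolding connected_graph_def
  proof (intro conjI ballI)
    fix x y assume "x \<in> GV m" "y \<in> GV m"
    then show "(GE m)\<^sup>*\<^sup>* x y" using from0 symE by (meson rtranclp_trans)
  qed (use G_simple in \<open>auto simp: GV_def\<close>)
qed

lemma deg_leaf: "m+2 \<le> y \<Longrightarrow> y \<le> 2*m+1 \<Longrightarrow> deg (GV m) (GE m) y = 1"
proof -
  assume "m+2 \<le> y" "y \<le> 2*m+1"
  then have "nbrs (GV m) (GE m) y = {0}" by (auto simp: nbrs_def GV_def GE_leaf)
  then show ?thesis by (simp add: deg_def)
qed

lemma deg_1: "1 \<le> m \<Longrightarrow> deg (GV m) (GE m) 1 = 2"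
proof -
  assume "1 \<le> m"
  then have "nbrs (GV m) (GE m) 1 = {0,2}" by (auto simp: nbrs_def GV_def GE_def)
  then show ?thesis by (simp add: deg_def)
qed

lemma G_fixing: assumes m: "2 \<le> m" shows "fixing_set (GV m) (GE m) {m+2..2*m}"
  unfolding fixing_set_def
proof (intro conjI allI impI)
  show "{m+2..2*m} \<subseteq> GV m" by (auto simp: GV_def)
  fix \<sigma> assume h: "automorphism (GV m) (GE m) \<sigma> \<and> (\<forall>x\<in>{m+2..2*m}. \<sigma> x = x)"
  then have a: "automorphism (GV m) (GE m) \<sigma>" and S: "\<And>x. m+2 \<le> x \<Longrightarrow> x \<le> 2*m \<Longrightarrow> \<sigma> x = x" by auto
  have f0: "\<sigma> 0 = 0"
    by (rule L2[OF a, of "m+2"]) (use m S in \<open>auto simp: GV_def GE_leaf\<close>)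
  have f1: "\<sigma> 1 = 1"
  proof (rule L2[OF a, of 0])
    fix y assume "y \<in> GV m" "GE m 0 y" "y \<noteq> 1" "deg (GV m) (GE m) y = deg (GV m) (GE m) 1"
    then show "\<sigma> y = y" using deg_leaf[of m y] deg_1[of m] m by (auto simp: GE_0)
  qed (use m f0 in \<open>auto simp: GV_def GE_0\<close>)
  have path: "j \<le> m+1 \<Longrightarrow> \<sigma> j = j" for j
  proof (induction j rule: less_induct)
    case (less j)
    show ?case
    proof (cases "j \<le> 1")
      case True then show ?thesis using f0 f1 by (cases j) auto
    next
      case False
      have p1: "\<sigma> (j-1) = j-1" "\<sigma> (j-2) = j-2" using less False by auto
      show ?thesis
      proof (rule L2[OF a, of "j-1"])
        fix y assume "y \<in> GV m" "GE m (j-1) y" "y \<noteq> j"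
        then have "y = j - 2" using False less.prems by (auto simp: GE_mid)
        then show "\<sigma> y = y" using p1 by simp
      qed (use False less.prems p1 in \<open>auto simp: GV_def GE_mid\<close>)
    qed
  qed
  have nonlast: "\<sigma> x = x" if "x \<in> GV m" "x \<noteq> 2*m+1" for x
  proof -
    from that consider "x \<le> m+1" | "m+2 \<le> x" "x \<le> 2*m" unfolding GV_def by fastforce
    then show ?thesis using path S by cases auto
  qed
  have last: "\<sigma> (2*m+1) = 2*m+1"
    by (rule elim[OF a]) (use nonlast in \<open>auto simp: GV_def\<close>)
  show "\<forall>x\<in>GV m. \<sigma> x = x" using nonlast last by blast
qed

lemma G_lower: assumes m: "2 \<le> m" and S: "fixing_set (GV m) (GE m) S" shows "m - 1 \<le> card S"
proof -
  define L where "L = {m+2..2*m+1}"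
  have SV: "S \<subseteq> GV m" using S by (simp add: fixing_set_def)
  have fS: "finite S" using SV finite_subset by (auto simp: GV_def)
  have uniq: "\<forall>a\<in>L - S. \<forall>b\<in>L - S. a = b"
  proof (intro ballI, rule ccontr)
    fix a b assume ab: "a \<in> L - S" "b \<in> L - S" "a \<noteq> b"
    have aut: "automorphism (GV m) (GE m) (sw a b)"
      by (rule sw_aut) (use ab in \<open>auto simp: L_def GV_def GE_def\<close>)
    have "\<forall>x\<in>S. sw a b x = x" using ab by (auto simp: sw_def)
    then have "\<forall>x\<in>GV m. sw a b x = x" using S aut by (auto simp: fixing_set_def)
    moreover have "a \<in> GV m" using ab by (auto simp: L_def GV_def)
    ultimately have "sw a b a = a" by blast
    with ab show False by (simp add: sw_def)
  qed
  have "card (L - S) \<le> 1" using uniq card_le_Suc0_iff_eq[of "L - S"] by (auto simp: L_def)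
  moreover have "card L \<le> card (L \<inter> S) + card (L - S)"
    by (metis add.commute card_Un_le Un_Diff_Int)
  moreover have "card (L \<inter> S) \<le> card S" using fS by (simp add: card_mono)
  moreover have "card L = m" by (simp add: L_def)
  ultimately show ?thesis by linarith
qed

lemma G_fix: assumes "2 \<le> m" shows "fix_num (GV m) (GE m) = m - 1"
proof (rule fix_numI[OF _ G_fixing[OF assms]])
  show "finite (GV m)" by (simp add: GV_def)
  show "card {m+2..2*m} = m - 1" by simp
qed (use G_lower assms in auto)



definition gg :: "nat \<Rightarrow> nat \<Rightarrow> nat" where
  "gg m x = (if 1 \<le> x \<and> x \<le> m then x+m+1 else if m+2 \<le> x \<and> x \<le> 2*m+1 then x-(m+1) else x)"

abbreviation FV :: "nat \<Rightarrow> (nat + nat) set" where "FV m \<equiv> functigraph_vertices (GV m)"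
abbreviation FE :: "nat \<Rightarrow> (nat + nat) \<Rightarrow> (nat + nat) \<Rightarrow> bool" where
  "FE m \<equiv> functigraph_edges (GV m) (GE m) (gg m)"

lemma gg_V: "x \<in> GV m \<Longrightarrow> gg m x \<in> GV m" by (auto simp: gg_def GV_def)
lemma gg_inv: "x \<in> GV m \<Longrightarrow> gg m (gg m x) = x" by (auto simp: gg_def GV_def)
lemma gg_eq: "b \<in> GV m \<Longrightarrow> x \<in> GV m \<Longrightarrow> (x = gg m b) \<longleftrightarrow> (b = gg m x)"
  using gg_inv by metis

lemma GV_mem: "x \<in> GV m \<longleftrightarrow> x \<le> 2*m+1" by (auto simp: GV_def)

lemma FE_simps:
  "FE m (Inl a) (Inl b) = GE m a b"
  "FE m (Inr a) (Inr b) = GE m a b"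
  "FE m (Inl a) (Inr b) = (a \<in> GV m \<and> b = gg m a)"
  "FE m (Inr a) (Inl b) = (b \<in> GV m \<and> a = gg m b)"
  by (auto simp: functigraph_edges_def)

lemma FV_simps: "Inl a \<in> FV m \<longleftrightarrow> a \<in> GV m" "Inr a \<in> FV m \<longleftrightarrow> a \<in> GV m"
  by (auto simp: functigraph_vertices_def)

lemma nbL_mid: "1 \<le> j \<Longrightarrow> j \<le> m \<Longrightarrow> FE m (Inl j) y \<longleftrightarrow> y = Inl (j-1) \<or> y = Inl (j+1) \<or> y = Inr (j+m+1)"
  by (cases y) (auto simp: FE_simps GE_def gg_def GV_mem)
lemma nbR_mid: "1 \<le> j \<Longrightarrow> j \<le> m \<Longrightarrow> FE m (Inr j) y \<longleftrightarrow> y = Inr (j-1) \<or> y = Inr (j+1) \<or> y = Inl (j+m+1)"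
  by (cases y) (auto simp: FE_simps GE_def gg_def GV_mem split: if_splits)
lemma nbL_end: "FE m (Inl (m+1)) y \<longleftrightarrow> y = Inl m \<or> y = Inr (m+1)"
  by (cases y) (auto simp: FE_simps GE_def gg_def GV_mem)
lemma nbR_end: "FE m (Inr (m+1)) y \<longleftrightarrow> y = Inr m \<or> y = Inl (m+1)"
  by (cases y) (auto simp: FE_simps GE_def gg_def GV_mem split: if_splits)
lemma nbR_leaf: "1 \<le> j \<Longrightarrow> j \<le> m \<Longrightarrow> FE m (Inr (j+m+1)) y \<longleftrightarrow> y = Inr 0 \<or> y = Inl j"
  by (cases y) (auto simp: FE_simps GE_def gg_def GV_mem split: if_splits)
lemma nbL_leaf: "1 \<le> j \<Longrightarrow> j \<le> m \<Longrightarrow> FE m (Inl (j+m+1)) y \<longleftrightarrow> y = Inl 0 \<or> y = Inr j"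
  by (cases y) (auto simp: FE_simps GE_def gg_def GV_mem split: if_splits)

lemma finite_FV: "finite (FV m)" by (simp add: functigraph_vertices_def GV_def)

lemma deg2:
  assumes "nbrs (FV m) (FE m) v = {a, b}" "a \<noteq> b" shows "deg (FV m) (FE m) v = 2"
  using assms by (simp add: deg_def)

lemma degR_leaf: "1 \<le> j \<Longrightarrow> j \<le> m \<Longrightarrow> deg (FV m) (FE m) (Inr (j+m+1)) = 2"
  by (rule deg2[of _ _ "Inr 0" "Inl j"]) (auto simp: nbrs_def nbR_leaf[simplified] FV_simps GV_mem)
lemma degL_leaf: "1 \<le> j \<Longrightarrow> j \<le> m \<Longrightarrow> deg (FV m) (FE m) (Inl (j+m+1)) = 2"
  by (rule deg2[of _ _ "Inl 0" "Inr j"]) (auto simp: nbrs_def nbL_leaf[simplified] FV_simps GV_mem)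
lemma degR_end: "deg (FV m) (FE m) (Inr (m+1)) = 2"
  by (rule deg2[of _ _ "Inr m" "Inl (m+1)"]) (auto simp: nbrs_def nbR_end[simplified] FV_simps GV_mem)

lemma deg3:
  assumes "A \<subseteq> nbrs (FV m) (FE m) v" "card A = 3" shows "3 \<le> deg (FV m) (FE m) v"
proof -
  have "finite (nbrs (FV m) (FE m) v)" using finite_FV by (simp add: nbrs_def)
  then show ?thesis using assms card_mono unfolding deg_def by metis
qed

lemma degL3: assumes "x \<le> m" "1 \<le> m" shows "3 \<le> deg (FV m) (FE m) (Inl x)"
proof (cases "x = 0")
  case True
  show ?thesis
    by (rule deg3[of "{Inl 1, Inr 0, Inl (m+2)}"]) (use True assms in \<open>auto simp: nbrs_def FE_simps FV_simps GV_mem GE_def gg_def\<close>)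
next
  case False
  show ?thesis
    by (rule deg3[of "{Inl (x-1), Inl (x+1), Inr (x+m+1)}"]) (use False assms in \<open>auto simp: nbrs_def FE_simps FV_simps GV_mem GE_def gg_def\<close>)
qed

lemma degR3: assumes "x \<le> m" "1 \<le> m" shows "3 \<le> deg (FV m) (FE m) (Inr x)"
proof (cases "x = 0")
  case True
  show ?thesis
    by (rule deg3[of "{Inr 1, Inl 0, Inr (m+2)}"]) (use True assms in \<open>auto simp: nbrs_def FE_simps FV_simps GV_mem GE_def gg_def\<close>)
next
  case False
  show ?thesis
    by (rule deg3[of "{Inr (x-1), Inr (x+1), Inl (x+m+1)}"]) (use False assms in \<open>auto simp: nbrs_def FE_simps FV_simps GV_mem GE_def gg_def\<close>)
qed



lemmas nbs = nbL_mid[simplified] nbR_mid[simplified] nbL_end[simplified] nbR_end[simplified]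
  nbR_leaf[simplified] nbL_leaf[simplified]

lemma F_fixing: assumes m: "2 \<le> m" shows "fixing_set (FV m) (FE m) {Inl (m+1)}"
  unfolding fixing_set_def
proof (intro conjI allI impI)
  show "{Inl (m+1)} \<subseteq> FV m" by (auto simp: FV_simps GV_mem)
  fix \<sigma> assume h: "automorphism (FV m) (FE m) \<sigma> \<and> (\<forall>x\<in>{Inl (m+1)}. \<sigma> x = x)"
  then have a: "automorphism (FV m) (FE m) \<sigma>" and s0: "\<sigma> (Inl (m+1)) = Inl (m+1)" by auto
  have s1: "\<sigma> (Inl m) = Inl m"
  proof (rule L2[OF a, of "Inl (m+1)"])
    fix y assume "y \<in> FV m" "FE m (Inl (m+1)) y" "y \<noteq> Inl m" "deg (FV m) (FE m) y = deg (FV m) (FE m) (Inl m)"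
    then show "\<sigma> y = y" using degR_end[of m] degL3[of m m] m by (auto simp: nbs)
  qed (use s0 m in \<open>auto simp: FV_simps GV_mem nbs\<close>)
  have s2: "\<sigma> (Inr (m+1)) = Inr (m+1)"
    by (rule L2[OF a, of "Inl (m+1)"]) (use s0 s1 m in \<open>auto simp: FV_simps GV_mem nbs\<close>)
  have s3: "\<sigma> (Inr m) = Inr m"
    by (rule L2[OF a, of "Inr (m+1)"]) (use s0 s2 m in \<open>auto simp: FV_simps GV_mem nbs\<close>)
  have ladder: "\<sigma> (Inl j) = Inl j \<and> \<sigma> (Inr j) = Inr j" if "j \<le> m+1" for j
    using that
  proof (induction "m+1-j" arbitrary: j rule: less_induct)
    case less
    show ?case
    proof (cases "m \<le> j")
      case True
      then have "j = m \<or> j = m+1" using less.prems by auto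
      then show ?thesis using s0 s1 s2 s3 by auto
    next
      case False
      have ih1: "\<sigma> (Inl (j+1)) = Inl (j+1)" "\<sigma> (Inr (j+1)) = Inr (j+1)"
        using less.hyps[of "j+1"] False by auto
      have ih2: "\<sigma> (Inl (j+2)) = Inl (j+2)" "\<sigma> (Inr (j+2)) = Inr (j+2)"
        using less.hyps[of "j+2"] False by auto
      have l: "\<sigma> (Inl j) = Inl j"
      proof (rule L2[OF a, of "Inl (j+1)"])
        fix y assume "y \<in> FV m" "FE m (Inl (j+1)) y" "y \<noteq> Inl j" "deg (FV m) (FE m) y = deg (FV m) (FE m) (Inl j)"
        then show "\<sigma> y = y" using degR_leaf[of "j+1" m] degL3[of j m] m False ih2
          by (auto simp: nbs)
      qed (use ih1 m False in \<open>auto simp: FV_simps GV_mem nbs\<close>)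
      have r: "\<sigma> (Inr j) = Inr j"
      proof (rule L2[OF a, of "Inr (j+1)"])
        fix y assume "y \<in> FV m" "FE m (Inr (j+1)) y" "y \<noteq> Inr j" "deg (FV m) (FE m) y = deg (FV m) (FE m) (Inr j)"
        then show "\<sigma> y = y" using degL_leaf[of "j+1" m] degR3[of j m] m False ih2
          by (auto simp: nbs)
      qed (use ih1 m False in \<open>auto simp: FV_simps GV_mem nbs\<close>)
      show ?thesis using l r by simp
    qed
  qed
  have leafR: "\<sigma> (Inr (j+m+1)) = Inr (j+m+1)" if j: "1 \<le> j" "j \<le> m" for j
  proof (rule L2[OF a, of "Inl j"])
    have l1: "\<sigma> (Inl (j-1)) = Inl (j-1)" using ladder[of "j-1"] j by simp
    have l2: "\<sigma> (Inl (j+1)) = Inl (j+1)" using ladder[of "j+1"] j by simp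
    fix y assume "y \<in> FV m" "FE m (Inl j) y" "y \<noteq> Inr (j+m+1)"
    then have "y = Inl (j-1) \<or> y = Inl (j+1)" using nbL_mid[OF j] by auto
    then show "\<sigma> y = y" using l1 l2 by auto
  next
    show "FE m (Inl j) (Inr (j+m+1))" using nbL_mid[OF j] by simp
  qed (use ladder[of j] j in \<open>auto simp: FV_simps GV_mem\<close>)
  have leafL: "\<sigma> (Inl (j+m+1)) = Inl (j+m+1)" if j: "1 \<le> j" "j \<le> m" for j
  proof (rule L2[OF a, of "Inr j"])
    have l1: "\<sigma> (Inr (j-1)) = Inr (j-1)" using ladder[of "j-1"] j by simp
    have l2: "\<sigma> (Inr (j+1)) = Inr (j+1)" using ladder[of "j+1"] j by simp
    fix y assume "y \<in> FV m" "FE m (Inr j) y" "y \<noteq> Inl (j+m+1)"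
    then have "y = Inr (j-1) \<or> y = Inr (j+1)" using nbR_mid[OF j] by auto
    then show "\<sigma> y = y" using l1 l2 by auto
  next
    show "FE m (Inr j) (Inl (j+m+1))" using nbR_mid[OF j] by simp
  qed (use ladder[of j] j in \<open>auto simp: FV_simps GV_mem\<close>)
  have all: "\<sigma> (Inl x) = Inl x \<and> \<sigma> (Inr x) = Inr x" if x: "x \<le> 2*m+1" for x
  proof (cases "x \<le> m+1")
    case True then show ?thesis using ladder by blast
  next
    case False
    define j where "j = x - (m+1)"
    have jj: "x = j+m+1" "1 \<le> j" "j \<le> m" using False x by (auto simp: j_def)
    show ?thesis using leafL[OF jj(2,3)] leafR[OF jj(2,3)] jj(1) by simp
  qed
  show "\<forall>x\<in>FV m. \<sigma> x = x"
    using all by (auto simp: functigraph_vertices_def GV_mem)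
qed

definition ss :: "nat + nat \<Rightarrow> nat + nat" where "ss = case_sum Inr Inl"

lemma ss_aut: "automorphism (FV m) (FE m) ss"
  unfolding automorphism_def
proof
  show "bij_betw ss (FV m) (FV m)"
    by (rule bij_betw_byWitness[where f'=ss]) (auto simp: ss_def functigraph_vertices_def split: sum.splits)
  show "\<forall>x\<in>FV m. \<forall>y\<in>FV m. FE m x y = FE m (ss x) (ss y)"
  proof (intro ballI)
    fix x y assume "x \<in> FV m" "y \<in> FV m"
    then show "FE m x y = FE m (ss x) (ss y)"
      by (cases x; cases y) (auto simp: ss_def FE_simps FV_simps gg_inv gg_V)
  qed
qed

lemma F_lower: assumes S: "fixing_set (FV m) (FE m) S" shows "1 \<le> card S"
proof (rule ccontr)
  assume "\<not> 1 \<le> card S"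
  moreover have "finite S" using S finite_FV finite_subset by (auto simp: fixing_set_def)
  ultimately have "S = {}" using card_0_eq by fastforce
  then have "\<forall>x\<in>FV m. ss x = x" using S ss_aut by (auto simp: fixing_set_def)
  moreover have "Inl 0 \<in> FV m" by (simp add: FV_simps GV_mem)
  ultimately show False by (auto simp: ss_def)
qed

lemma F_fix: assumes "2 \<le> m" shows "fix_num (FV m) (FE m) = 1"
  by (rule fix_numI[OF finite_FV F_fixing[OF assms]]) (use F_lower in auto)


theorem lemma2p9:
  fixes t :: nat
  assumes "t \<ge> 2"
  shows "\<exists>(V :: nat set) E g. connected_graph V E \<and> g \<in> V \<rightarrow> V \<and>
    int (fix_num V E) - int (fix_num (functigraph_vertices V) (functigraph_edges V E g)) = int t"
proof -
  let ?m = "t+2"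
  have m: "2 \<le> ?m" by simp
  have c: "connected_graph (GV ?m) (GE ?m)" by (rule G_conn)
  have g: "gg ?m \<in> GV ?m \<rightarrow> GV ?m" using gg_V by blast
  have f1: "fix_num (GV ?m) (GE ?m) = t+1" using G_fix[OF m] by simp
  have f2: "fix_num (FV ?m) (FE ?m) = 1" using F_fix[OF m] .
  show ?thesis using c g f1 f2 by (intro exI[of _ "GV ?m"] exI[of _ "GE ?m"] exI[of _ "gg ?m"]) simp
qed
end
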